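(* For every general S4K-frame $\mathfrak F$ and every $\mathcal L_{\multimap}$-formula $\varphi$: $\mathfrak F\Vdash t(\varphi)$ if and only if $\hat\rho\mathfrak F\Vdash\varphi$.
   Context: $\mathcal L_{\multimap}$: atoms, $\top,\bot,\wedge,\vee,\to,\multimap$. $\mathcal L_{i,m}$: classical bimodal language with boxes $\Box_i,\Box_m$. The translation $t:\mathcal L_{\multimap}\to\mathcal L_{i,m}$: $t(p)=\Box_ip$, $t(\top)=\top$, $t(\bot)=\bot$, $t(\varphi\wedge\psi)=\Box_i(t\varphi\wedge t\psi)$, $t(\varphi\vee\psi)=\Box_i(t\varphi\vee t\psi)$, $t(\varphi\to\psi)=\Box_i(t\varphi\to t\psi)$, $t(\varphi\multimap\psi)=\Box_i\Box_m(t\varphi\to t\psi)$. General S4K-frame $(X,R_i,R_m,P)$: $R_i$ preorder, $R_m$ binary relation, $P$ Boolean subalgebra of $\mathcal P(X)$ closed under $[i]a=\{x\mid\forall y(xR_iy\Rightarrow y\in a)\}$ and $[m]a$ (likewise); $\mathfrak F\Vdash\chi$ means $\chi$ is true at all points under all valuations into $P$ (standard Kripke clauses). For such $\mathfrak F$: $xR_m^*z$ iff $\exists y(xR_iy\wedge yR_mz)$; $x\sim y$ iff $xR_iy\wedge yR_ix$; $[x]$ its class, $[X]$ the classes; $[x][R_i][y]$ iff $xR_iy$; $[x][R_m^*][y]$ iff $xR_m^*y'$ for some $y'\sim y$; $\hat\rho P:=\{\{[x]\mid x\in[i]b\}\mid b\in P\}$; $\hat\rho\mathfrak F:=([X],[R_i],[R_m^*],\hat\rho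 P)$, a general $\multimap$-frame. For a general $\multimap$-frame $(Y,\preceq,\sqsubset,Q)$ (here $Q$ is a family of $\preceq$-upsets closed under the relevant operations), $\Vdash\varphi$ means: under every valuation into $Q$ the truth set of $\varphi$ is $Y$, where $\to$ is interpreted by $a\Rightarrow b=\{x\mid\forall y(x\preceq y,y\in a\Rightarrow y\in b)\}$ and $\multimap$ by $a\Rrightarrow b=\{x\mid\forall y(x\sqsubset y,y\in a\Rightarrow y\in b)\}$, $\wedge,\vee$ by $\cap,\cup$. *)

theory Defs
  imports Main
begin

datatype 'v ifm =
    IAtom 'v | ITop | IBot
  | IAnd "'v ifm" "'v ifm" | IOr "'v ifm" "'v ifm"
  | IImp "'v ifm" "'v ifm" | ILimp "'v ifm" "'v ifm"

datatype 'v mfm =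
    MAtom 'v | MTop | MBot | MNot "'v mfm"
  | MAnd "'v mfm" "'v mfm" | MOr "'v mfm" "'v mfm" | MImp "'v mfm" "'v mfm"
  | BoxI "'v mfm" | BoxM "'v mfm"

fun tr :: "'v ifm \<Rightarrow> 'v mfm" where
  "tr (IAtom p) = BoxI (MAtom p)"
| "tr ITop = MTop"
| "tr IBot = MBot"
| "tr (IAnd a b) = BoxI (MAnd (tr a) (tr b))"
| "tr (IOr a b) = BoxI (MOr (tr a) (tr b))"
| "tr (IImp a b) = BoxI (MImp (tr a) (tr b))"
| "tr (ILimp a b) = BoxI (BoxM (MImp (tr a) (tr b)))"

definition boxset :: "'a set \<Rightarrow> ('a \<Rightarrow> 'a \<Rightarrow> bool) \<Rightarrow> 'a set \<Rightarrow> 'a set" where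
  "boxset X R a = {x \<in> X. \<forall>y. R x y \<longrightarrow> y \<in> a}"

definition gen_S4K_frame ::
  "'a set \<Rightarrow> ('a \<Rightarrow> 'a \<Rightarrow> bool) \<Rightarrow> ('a \<Rightarrow> 'a \<Rightarrow> bool) \<Rightarrow> 'a set set \<Rightarrow> bool" where
  "gen_S4K_frame X Ri Rm P \<longleftrightarrow>
     (\<forall>x y. Ri x y \<longrightarrow> x \<in> X \<and> y \<in> X) \<and>
     (\<forall>x y. Rm x y \<longrightarrow> x \<in> X \<and> y \<in> X) \<and>
     (\<forall>x\<in>X. Ri x x) \<and>
     (\<forall>x y z. Ri x y \<longrightarrow> Ri y z \<longrightarrow> Ri x z) \<and>
     P \<subseteq> Pow X \<and> {} \<in> P \<and> X \<in> P \<and>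
     (\<forall>a\<in>P. X - a \<in> P) \<and>
     (\<forall>a\<in>P. \<forall>b\<in>P. a \<inter> b \<in> P) \<and>
     (\<forall>a\<in>P. \<forall>b\<in>P. a \<union> b \<in> P) \<and>
     (\<forall>a\<in>P. boxset X Ri a \<in> P) \<and>
     (\<forall>a\<in>P. boxset X Rm a \<in> P)"

fun mtrue :: "('a \<Rightarrow> 'a \<Rightarrow> bool) \<Rightarrow> ('a \<Rightarrow> 'a \<Rightarrow> bool) \<Rightarrow> ('v \<Rightarrow> 'a set) \<Rightarrow> 'a \<Rightarrow> 'v mfm \<Rightarrow> bool" where
  "mtrue Ri Rm V x (MAtom p) = (x \<in> V p)"
| "mtrue Ri Rm V x MTop = True"
| "mtrue Ri Rm V x MBot = False"
| "mtrue Ri Rm V x (MNot a) = (\<not> mtrue Ri Rm V x a)"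
| "mtrue Ri Rm V x (MAnd a b) = (mtrue Ri Rm V x a \<and> mtrue Ri Rm V x b)"
| "mtrue Ri Rm V x (MOr a b) = (mtrue Ri Rm V x a \<or> mtrue Ri Rm V x b)"
| "mtrue Ri Rm V x (MImp a b) = (mtrue Ri Rm V x a \<longrightarrow> mtrue Ri Rm V x b)"
| "mtrue Ri Rm V x (BoxI a) = (\<forall>y. Ri x y \<longrightarrow> mtrue Ri Rm V y a)"
| "mtrue Ri Rm V x (BoxM a) = (\<forall>y. Rm x y \<longrightarrow> mtrue Ri Rm V y a)"

definition frame_valid ::
  "'a set \<Rightarrow> ('a \<Rightarrow> 'a \<Rightarrow> bool) \<Rightarrow> ('a \<Rightarrow> 'a \<Rightarrow> bool) \<Rightarrow> 'a set set \<Rightarrow> 'v mfm \<Rightarrow> bool" where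
  "frame_valid X Ri Rm P \<chi> \<longleftrightarrow>
     (\<forall>V. (\<forall>p. V p \<in> P) \<longrightarrow> (\<forall>x\<in>X. mtrue Ri Rm V x \<chi>))"

fun ival :: "'b set \<Rightarrow> ('b \<Rightarrow> 'b \<Rightarrow> bool) \<Rightarrow> ('b \<Rightarrow> 'b \<Rightarrow> bool) \<Rightarrow> ('v \<Rightarrow> 'b set) \<Rightarrow> 'v ifm \<Rightarrow> 'b set" where
  "ival Y le sq v (IAtom p) = v p"
| "ival Y le sq v ITop = Y"
| "ival Y le sq v IBot = {}"
| "ival Y le sq v (IAnd a b) = ival Y le sq v a \<inter> ival Y le sq v b"
| "ival Y le sq v (IOr a b) = ival Y le sq v a \<union> ival Y le sq v b"
| "ival Y le sq v (IImp a b) =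
     {x \<in> Y. \<forall>y. le x y \<longrightarrow> y \<in> ival Y le sq v a \<longrightarrow> y \<in> ival Y le sq v b}"
| "ival Y le sq v (ILimp a b) =
     {x \<in> Y. \<forall>y. sq x y \<longrightarrow> y \<in> ival Y le sq v a \<longrightarrow> y \<in> ival Y le sq v b}"

definition limp_valid ::
  "'b set \<Rightarrow> ('b \<Rightarrow> 'b \<Rightarrow> bool) \<Rightarrow> ('b \<Rightarrow> 'b \<Rightarrow> bool) \<Rightarrow> 'b set set \<Rightarrow> 'v ifm \<Rightarrow> bool" where
  "limp_valid Y le sq Q \<phi> \<longleftrightarrow>
     (\<forall>v. (\<forall>p. v p \<in> Q) \<longrightarrow> ival Y le sq v \<phi> = Y)"

definition Rmstar :: "('a \<Rightarrow> 'a \<Rightarrow> bool) \<Rightarrow> ('a \<Rightarrow> 'a \<Rightarrow> bool) \<Rightarrow> 'a \<Rightarrow> 'a \<Rightarrow> bool" where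
  "Rmstar Ri Rm x z \<longleftrightarrow> (\<exists>y. Ri x y \<and> Rm y z)"

definition equivI :: "('a \<Rightarrow> 'a \<Rightarrow> bool) \<Rightarrow> 'a \<Rightarrow> 'a \<Rightarrow> bool" where
  "equivI Ri x y \<longleftrightarrow> Ri x y \<and> Ri y x"

definition cls :: "'a set \<Rightarrow> ('a \<Rightarrow> 'a \<Rightarrow> bool) \<Rightarrow> 'a \<Rightarrow> 'a set" where
  "cls X Ri x = {y \<in> X. equivI Ri x y}"

definition rho_carrier :: "'a set \<Rightarrow> ('a \<Rightarrow> 'a \<Rightarrow> bool) \<Rightarrow> 'a set set" where
  "rho_carrier X Ri = cls X Ri ` X"

definition rho_Ri :: "'a set \<Rightarrow> ('a \<Rightarrow> 'a \<Rightarrow> bool) \<Rightarrow> 'a set \<Rightarrow> 'a set \<Rightarrow> bool" where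
  "rho_Ri X Ri c d \<longleftrightarrow>
     (\<exists>x\<in>X. \<exists>y\<in>X. c = cls X Ri x \<and> d = cls X Ri y \<and> Ri x y)"

definition rho_Rm :: "'a set \<Rightarrow> ('a \<Rightarrow> 'a \<Rightarrow> bool) \<Rightarrow> ('a \<Rightarrow> 'a \<Rightarrow> bool) \<Rightarrow> 'a set \<Rightarrow> 'a set \<Rightarrow> bool" where
  "rho_Rm X Ri Rm c d \<longleftrightarrow>
     (\<exists>x\<in>X. \<exists>y\<in>X. c = cls X Ri x \<and> d = cls X Ri y \<and>
        (\<exists>y'. equivI Ri y' y \<and> Rmstar Ri Rm x y'))"

definition rho_P :: "'a set \<Rightarrow> ('a \<Rightarrow> 'a \<Rightarrow> bool) \<Rightarrow> 'a set set \<Rightarrow> 'a set set set" where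
  "rho_P X Ri P = {cls X Ri ` boxset X Ri b | b. b \<in> P}"

end

theory Submission
  imports Defs
begin

lemma frm:
  assumes "gen_S4K_frame X Ri Rm P"
  shows "\<And>x y. Ri x y \<Longrightarrow> x \<in> X \<and> y \<in> X" "\<And>x y. Rm x y \<Longrightarrow> x \<in> X \<and> y \<in> X"
    "\<And>x. x \<in> X \<Longrightarrow> Ri x x" "\<And>x y z. Ri x y \<Longrightarrow> Ri y z \<Longrightarrow> Ri x z"
proof -
  have A: "(\<forall>x y. Ri x y \<longrightarrow> x \<in> X \<and> y \<in> X) \<and>
     (\<forall>x y. Rm x y \<longrightarrow> x \<in> X \<and> y \<in> X) \<and>
     (\<forall>x\<in>X. Ri x x) \<and>
     (\<forall>x y z. Ri x y \<longrightarrow> Ri y z \<longrightarrow> Ri x z)"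
    using assms unfolding gen_S4K_frame_def by (elim conjE) (intro conjI)
  show "\<And>x y. Ri x y \<Longrightarrow> x \<in> X \<and> y \<in> X" using A by blast
  show "\<And>x y. Rm x y \<Longrightarrow> x \<in> X \<and> y \<in> X" using A by blast
  show "\<And>x. x \<in> X \<Longrightarrow> Ri x x" using A by blast
  show "\<And>x y z. Ri x y \<Longrightarrow> Ri y z \<Longrightarrow> Ri x z" using A by blast
qed

lemma cls_eq:
  assumes "gen_S4K_frame X Ri Rm P" "x \<in> X" "y \<in> X"
  shows "cls X Ri x = cls X Ri y \<longleftrightarrow> equivI Ri x y"
proof
  assume "cls X Ri x = cls X Ri y"
  moreover have "x \<in> cls X Ri x" using frm(3)[OF assms(1)] assms unfolding cls_def equivI_def by auto
  ultimately show "equivI Ri x y" unfolding cls_def equivI_def by auto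
next
  assume "equivI Ri x y"
  then show "cls X Ri x = cls X Ri y" using frm(4)[OF assms(1)] unfolding cls_def equivI_def by blast
qed

lemma tr_shape: "tr \<phi> = MTop \<or> tr \<phi> = MBot \<or> (\<exists>c. tr \<phi> = BoxI c)"
  by (cases \<phi>) simp_all

lemma persist:
  assumes F: "gen_S4K_frame X Ri Rm P" and h: "mtrue Ri Rm V x (tr \<phi>)" "Ri x y"
  shows "mtrue Ri Rm V y (tr \<phi>)"
proof -
  consider "tr \<phi> = MTop" | "tr \<phi> = MBot" | c where "tr \<phi> = BoxI c" using tr_shape by blast
  then show ?thesis
  proof cases
    case 1 then show ?thesis by simp
  next
    case 2 then show ?thesis using h by simp
  next
    case (3 c)
    have "mtrue Ri Rm V z c" if "Ri y z" for z
    proof -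
      have "Ri x z" using frm(4)[OF F, OF h(2) that] .
      then show ?thesis using h(1) 3 by simp
    qed
    then show ?thesis using 3 by simp
  qed
qed

lemma key:
  assumes F: "gen_S4K_frame X Ri Rm P" and v: "\<And>p. v p = cls X Ri ` boxset X Ri (V p)"
  shows "x \<in> X \<Longrightarrow> mtrue Ri Rm V x (tr \<phi>) \<longleftrightarrow>
     cls X Ri x \<in> ival (rho_carrier X Ri) (rho_Ri X Ri) (rho_Rm X Ri Rm) v \<phi>"
proof (induction \<phi> arbitrary: x)
  case (IAtom p)
  show ?case
  proof
    assume "mtrue Ri Rm V x (tr (IAtom p))"
    then have "x \<in> boxset X Ri (V p)" using IAtom unfolding boxset_def by auto
    then show "cls X Ri x \<in> ival (rho_carrier X Ri) (rho_Ri X Ri) (rho_Rm X Ri Rm) v (IAtom p)"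
      using v by simp
  next
    assume "cls X Ri x \<in> ival (rho_carrier X Ri) (rho_Ri X Ri) (rho_Rm X Ri Rm) v (IAtom p)"
    then obtain z where z: "z \<in> boxset X Ri (V p)" "cls X Ri x = cls X Ri z" using v by auto
    then have "z \<in> X" unfolding boxset_def by auto
    then have "Ri x z" "Ri z x" using z cls_eq[OF F IAtom] unfolding equivI_def by auto
    have "y \<in> V p" if "Ri x y" for y
    proof -
      have "Ri z y" using frm(4)[OF F] \<open>Ri z x\<close> that by blast
      then show ?thesis using z(1) unfolding boxset_def by blast
    qed
    then show "mtrue Ri Rm V x (tr (IAtom p))" by simp
  qed
next
  case ITop
  then show ?case by (simp add: rho_carrier_def)
next
  case IBot
  then show ?case by simp
next
  case (IAnd a b)
  have "mtrue Ri Rm V x (tr (IAnd a b)) \<longleftrightarrow> mtrue Ri Rm V x (tr a) \<and> mtrue Ri Rm V x (tr b)"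
    using persist[OF F] frm(3)[OF F, OF IAnd.prems] by auto
  then show ?case using IAnd by simp
next
  case (IOr a b)
  have "mtrue Ri Rm V x (tr (IOr a b)) \<longleftrightarrow> mtrue Ri Rm V x (tr a) \<or> mtrue Ri Rm V x (tr b)"
    using persist[OF F] frm(3)[OF F, OF IOr.prems] by auto
  then show ?case using IOr by simp
next
  case (IImp a b)
  have rr: "rho_Ri X Ri (cls X Ri x) d \<longleftrightarrow> (\<exists>y. Ri x y \<and> d = cls X Ri y)" for d
  proof
    assume "rho_Ri X Ri (cls X Ri x) d"
    then obtain x' y where h: "x' \<in> X" "y \<in> X" "cls X Ri x = cls X Ri x'" "d = cls X Ri y" "Ri x' y"
      unfolding rho_Ri_def by blast
    have "Ri x x'" using cls_eq[OF F IImp.prems h(1)] h(3) unfolding equivI_def by blast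
    then have "Ri x y" using frm(4)[OF F] h(5) by blast
    then show "\<exists>y. Ri x y \<and> d = cls X Ri y" using h(4) by blast
  next
    assume "\<exists>y. Ri x y \<and> d = cls X Ri y"
    then show "rho_Ri X Ri (cls X Ri x) d" using frm(1)[OF F] unfolding rho_Ri_def by blast
  qed
  have cx: "cls X Ri x \<in> rho_carrier X Ri" using IImp.prems by (simp add: rho_carrier_def)
  have "mtrue Ri Rm V x (tr (IImp a b)) \<longleftrightarrow> (\<forall>y. Ri x y \<longrightarrow> mtrue Ri Rm V y (tr a) \<longrightarrow> mtrue Ri Rm V y (tr b))"
    by simp
  also have "\<dots> \<longleftrightarrow> (\<forall>y. Ri x y \<longrightarrow> cls X Ri y \<in> ival (rho_carrier X Ri) (rho_Ri X Ri) (rho_Rm X Ri Rm) v a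
       \<longrightarrow> cls X Ri y \<in> ival (rho_carrier X Ri) (rho_Ri X Ri) (rho_Rm X Ri Rm) v b)"
  proof -
    have "Ri x y \<Longrightarrow> (mtrue Ri Rm V y (tr a) \<longrightarrow> mtrue Ri Rm V y (tr b)) \<longleftrightarrow>
       (cls X Ri y \<in> ival (rho_carrier X Ri) (rho_Ri X Ri) (rho_Rm X Ri Rm) v a
       \<longrightarrow> cls X Ri y \<in> ival (rho_carrier X Ri) (rho_Ri X Ri) (rho_Rm X Ri Rm) v b)" for y
    proof -
      assume "Ri x y" then have "y \<in> X" using frm(1)[OF F] by blast
      then show ?thesis using IImp.IH[of y] by simp
    qed
    then show ?thesis by blast
  qed
  also have "\<dots> \<longleftrightarrow> cls X Ri x \<in> ival (rho_carrier X Ri) (rho_Ri X Ri) (rho_Rm X Ri Rm) v (IImp a b)"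
    using cx by (simp add: rr) blast
  finally show ?case .
next
  case (ILimp a b)
  have rr: "rho_Rm X Ri Rm (cls X Ri x) d \<longleftrightarrow>
     (\<exists>w z y'. Ri x w \<and> Rm w y' \<and> equivI Ri y' z \<and> z \<in> X \<and> d = cls X Ri z)" for d
  proof
    assume "rho_Rm X Ri Rm (cls X Ri x) d"
    then obtain x' z y' w where "x' \<in> X" "z \<in> X" "cls X Ri x = cls X Ri x'" "d = cls X Ri z"
      "equivI Ri y' z" "Ri x' w" "Rm w y'"
      unfolding rho_Rm_def Rmstar_def by blast
    then show "\<exists>w z y'. Ri x w \<and> Rm w y' \<and> equivI Ri y' z \<and> z \<in> X \<and> d = cls X Ri z"
      using cls_eq[OF F ILimp.prems] frm(4)[OF F] unfolding equivI_def by blast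
  next
    assume "\<exists>w z y'. Ri x w \<and> Rm w y' \<and> equivI Ri y' z \<and> z \<in> X \<and> d = cls X Ri z"
    then show "rho_Rm X Ri Rm (cls X Ri x) d" using frm(1)[OF F] ILimp.prems
      unfolding rho_Rm_def Rmstar_def by blast
  qed
  have cx: "cls X Ri x \<in> rho_carrier X Ri" using ILimp.prems by (simp add: rho_carrier_def)
  show ?case
  proof
    assume H: "mtrue Ri Rm V x (tr (ILimp a b))"
    have "\<forall>d. rho_Rm X Ri Rm (cls X Ri x) d \<longrightarrow> d \<in> ival (rho_carrier X Ri) (rho_Ri X Ri) (rho_Rm X Ri Rm) v a
       \<longrightarrow> d \<in> ival (rho_carrier X Ri) (rho_Ri X Ri) (rho_Rm X Ri Rm) v b"
    proof (intro allI impI)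
      fix d
      assume d: "rho_Rm X Ri Rm (cls X Ri x) d" "d \<in> ival (rho_carrier X Ri) (rho_Ri X Ri) (rho_Rm X Ri Rm) v a"
      then obtain w z y' where w: "Ri x w" "Rm w y'" "equivI Ri y' z" "z \<in> X" "d = cls X Ri z"
        using rr by blast
      have "mtrue Ri Rm V z (tr a)" using d(2) ILimp.IH(1) w by blast
      then have "mtrue Ri Rm V y' (tr a)" using persist[OF F] w unfolding equivI_def by blast
      then have "mtrue Ri Rm V y' (tr b)" using H w by auto
      then have "mtrue Ri Rm V z (tr b)" using persist[OF F] w unfolding equivI_def by blast
      then show "d \<in> ival (rho_carrier X Ri) (rho_Ri X Ri) (rho_Rm X Ri Rm) v b"
        using ILimp.IH(2) w by blast
    qed
    then show "cls X Ri x \<in> ival (rho_carrier X Ri) (rho_Ri X Ri) (rho_Rm X Ri Rm) v (ILimp a b)"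
      using cx by simp
  next
    assume H: "cls X Ri x \<in> ival (rho_carrier X Ri) (rho_Ri X Ri) (rho_Rm X Ri Rm) v (ILimp a b)"
    show "mtrue Ri Rm V x (tr (ILimp a b))"
    proof (simp, intro allI impI)
      fix y z assume yz: "Ri x y" "Rm y z" "mtrue Ri Rm V z (tr a)"
      have zX: "z \<in> X" using frm(2)[OF F] yz by blast
      have eq: "equivI Ri z z" using frm(3)[OF F] zX unfolding equivI_def by blast
      have "cls X Ri z \<in> ival (rho_carrier X Ri) (rho_Ri X Ri) (rho_Rm X Ri Rm) v a"
        using ILimp.IH(1) zX yz by blast
      then have "cls X Ri z \<in> ival (rho_carrier X Ri) (rho_Ri X Ri) (rho_Rm X Ri Rm) v b"
      proof -
        have "rho_Rm X Ri Rm (cls X Ri x) (cls X Ri z)" using rr[of "cls X Ri z"] yz zX eq by blast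
        then show ?thesis using H \<open>cls X Ri z \<in> ival (rho_carrier X Ri) (rho_Ri X Ri) (rho_Rm X Ri Rm) v a\<close> by simp
      qed
      then show "mtrue Ri Rm V z (tr b)" using ILimp.IH(2) zX by blast
    qed
  qed
qed

lemma ival_sub:
  assumes "\<And>p. v p \<subseteq> Y"
  shows "ival Y le sq v \<phi> \<subseteq> Y"
  using assms by (induction \<phi>) auto

theorem lemma4p11:
  fixes X :: "'a set" and Ri Rm :: "'a \<Rightarrow> 'a \<Rightarrow> bool" and P :: "'a set set"
    and \<phi> :: "'v ifm"
  assumes "gen_S4K_frame X Ri Rm P"
  shows "frame_valid X Ri Rm P (tr \<phi>) \<longleftrightarrow>
         limp_valid (rho_carrier X Ri) (rho_Ri X Ri) (rho_Rm X Ri Rm) (rho_P X Ri P) \<phi>"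
proof
  assume H: "frame_valid X Ri Rm P (tr \<phi>)"
  show "limp_valid (rho_carrier X Ri) (rho_Ri X Ri) (rho_Rm X Ri Rm) (rho_P X Ri P) \<phi>"
    unfolding limp_valid_def
  proof (intro allI impI)
    fix v :: "'v \<Rightarrow> 'a set set" assume vP: "\<forall>p. v p \<in> rho_P X Ri P"
    define V :: "'v \<Rightarrow> 'a set" where "V p = (SOME b. b \<in> P \<and> v p = cls X Ri ` boxset X Ri b)" for p
    have V: "V p \<in> P \<and> v p = cls X Ri ` boxset X Ri (V p)" for p
      unfolding V_def proof (rule someI_ex)
      show "\<exists>b. b \<in> P \<and> v p = cls X Ri ` boxset X Ri b" using vP[rule_format, of p] unfolding rho_P_def by blast
    qed
    have sub: "v p \<subseteq> rho_carrier X Ri" for p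
      using V[of p] unfolding rho_carrier_def boxset_def by auto
    have VP: "\<forall>p. V p \<in> P" using V by blast
    have vV: "\<And>p. v p = cls X Ri ` boxset X Ri (V p)" using V by blast
    have mt: "mtrue Ri Rm V x (tr \<phi>)" if "x \<in> X" for x
      using H VP that unfolding frame_valid_def by blast
    have "rho_carrier X Ri \<subseteq> ival (rho_carrier X Ri) (rho_Ri X Ri) (rho_Rm X Ri Rm) v \<phi>"
    proof
      fix c assume "c \<in> rho_carrier X Ri"
      then obtain x where x: "x \<in> X" "c = cls X Ri x" unfolding rho_carrier_def by blast
      show "c \<in> ival (rho_carrier X Ri) (rho_Ri X Ri) (rho_Rm X Ri Rm) v \<phi>"
        using key[where v=v and V=V, OF assms vV x(1)] mt[OF x(1)] x(2) by simp
    qed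
    then show "ival (rho_carrier X Ri) (rho_Ri X Ri) (rho_Rm X Ri Rm) v \<phi> = rho_carrier X Ri"
      using ival_sub[of v, OF sub] by blast
  qed
next
  assume H: "limp_valid (rho_carrier X Ri) (rho_Ri X Ri) (rho_Rm X Ri Rm) (rho_P X Ri P) \<phi>"
  show "frame_valid X Ri Rm P (tr \<phi>)"
    unfolding frame_valid_def
  proof (intro allI impI ballI)
    fix V :: "'v \<Rightarrow> 'a set" and x assume VP: "\<forall>p. V p \<in> P" and x: "x \<in> X"
    define v where "v p = cls X Ri ` boxset X Ri (V p)" for p
    have "v p \<in> rho_P X Ri P" for p using VP unfolding v_def rho_P_def by blast
    then have "ival (rho_carrier X Ri) (rho_Ri X Ri) (rho_Rm X Ri Rm) v \<phi> = rho_carrier X Ri"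
      using H unfolding limp_valid_def by blast
    moreover have "cls X Ri x \<in> rho_carrier X Ri" using x unfolding rho_carrier_def by blast
    ultimately show "mtrue Ri Rm V x (tr \<phi>)"
      using key[where v=v and V=V, OF assms v_def x] by simp
  qed
qed

end
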